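(* Fix $m\ge1$. For every $\delta>0$ there exists $\varepsilon>0$ such that for every binary MAC $W$ with $m$ users the following holds: if for every $S\subseteq E_m$ the value $I(X[S];Y,X[S^c])$ lies in $\mathbb{Z}+(-\varepsilon,\varepsilon)$, then for every $S\subseteq E_m$ the value $I(X[E_m]\cdot S;Y)$ lies in $[0,\delta)\cup(1-\delta,1]$, and which of these two intervals contains it is determined by the integers nearest to the values $I(X[T];Y,X[T^c])$, $T\subseteq E_m$.
   Context: A binary MAC with $m$ users is a channel $W$ with input alphabet $\mathbb{F}_2^m$ and finite output alphabet. $E_m=\{1,\dots,m\}$; $X[E_m]$ has i.i.d. uniform components on $\mathbb{F}_2$ and $Y$ is the output of $W$ on input $X[E_m]$. For $S\subseteq E_m$, $X[S]=(X[i])_{i\in S}$, $S^c=E_m\setminus S$, and $X[E_m]\cdot S=\bigoplus_{i\in S}X[i]$ (sum in $\mathbb{F}_2$). Mutual information is in bits. *)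

theory Defs
  imports Complex_Main
begin

text \<open>An input X[E_m] in F_2^m is represented
  as a function nat => bool which is False outside {1..m}.  The output alphabet of a
  MAC is an arbitrary finite set Out of natural numbers (every finite alphabet can be
  encoded this way), and W x y is the transition probability W(y|x).\<close>

definition users :: "nat \<Rightarrow> nat set" where
  "users m = {1..m}"

definition inputs :: "nat \<Rightarrow> (nat \<Rightarrow> bool) set" where
  "inputs m = {x. \<forall>i. x i \<longrightarrow> i \<in> users m}"

definition binary_mac :: "nat \<Rightarrow> nat set \<Rightarrow> ((nat \<Rightarrow> bool) \<Rightarrow> nat \<Rightarrow> real) \<Rightarrow> bool" where
  "binary_mac m Out W \<longleftrightarrow> finite Out \<and>
     (\<forall>x\<in>inputs m. (\<forall>y. 0 \<le> W x y) \<and> (\<forall>y. y \<notin> Out \<longrightarrow> W x y = 0)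
                    \<and> (\<Sum>y\<in>Out. W x y) = 1)"

text \<open>Sample space: pairs (x,y) with x uniform on F_2^m and y the channel output.\<close>

definition omega :: "nat \<Rightarrow> nat set \<Rightarrow> ((nat \<Rightarrow> bool) \<times> nat) set" where
  "omega m Out = inputs m \<times> Out"

definition prob_ev :: "nat \<Rightarrow> nat set \<Rightarrow> ((nat \<Rightarrow> bool) \<Rightarrow> nat \<Rightarrow> real)
    \<Rightarrow> ((nat \<Rightarrow> bool) \<times> nat \<Rightarrow> bool) \<Rightarrow> real" where
  "prob_ev m Out W E = (\<Sum>\<omega>\<in>omega m Out. if E \<omega> then W (fst \<omega>) (snd \<omega>) / 2 ^ m else 0)"

definition mutual_info :: "nat \<Rightarrow> nat set \<Rightarrow> ((nat \<Rightarrow> bool) \<Rightarrow> nat \<Rightarrow> real)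
    \<Rightarrow> ((nat \<Rightarrow> bool) \<times> nat \<Rightarrow> 'a) \<Rightarrow> ((nat \<Rightarrow> bool) \<times> nat \<Rightarrow> 'b) \<Rightarrow> real" where
  "mutual_info m Out W F G =
     (\<Sum>a\<in>F ` omega m Out. \<Sum>b\<in>G ` omega m Out.
        let pab = prob_ev m Out W (\<lambda>\<omega>. F \<omega> = a \<and> G \<omega> = b);
            pa = prob_ev m Out W (\<lambda>\<omega>. F \<omega> = a);
            pb = prob_ev m Out W (\<lambda>\<omega>. G \<omega> = b)
        in if pab = 0 then 0 else pab * log 2 (pab / (pa * pb)))"

definition Xsub :: "nat set \<Rightarrow> (nat \<Rightarrow> bool) \<times> nat \<Rightarrow> (nat \<Rightarrow> bool)" where
  "Xsub S \<omega> = (\<lambda>i. fst \<omega> i \<and> i \<in> S)"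

definition Yout :: "(nat \<Rightarrow> bool) \<times> nat \<Rightarrow> nat" where
  "Yout \<omega> = snd \<omega>"

definition YXcompl :: "nat \<Rightarrow> nat set \<Rightarrow> (nat \<Rightarrow> bool) \<times> nat \<Rightarrow> nat \<times> (nat \<Rightarrow> bool)" where
  "YXcompl m S \<omega> = (Yout \<omega>, Xsub (users m - S) \<omega>)"

definition Xdot :: "nat set \<Rightarrow> (nat \<Rightarrow> bool) \<times> nat \<Rightarrow> bool" where
  "Xdot S \<omega> = odd (card {i\<in>S. fst \<omega> i})"

end

theory Submission
  imports Defs
begin


locale finprob =
  fixes \<Omega> :: "'w set" and w :: "'w \<Rightarrow> real"
  assumes fin: "finite \<Omega>" and wnn: "\<And>x. x \<in> \<Omega> \<Longrightarrow> 0 \<le> w x" and wsum: "sum w \<Omega> = 1"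
begin

definition P :: "('w \<Rightarrow> bool) \<Rightarrow> real" where
  "P E = (\<Sum>x\<in>\<Omega>. if E x then w x else 0)"

definition Ent :: "('w \<Rightarrow> 'a) \<Rightarrow> real" where
  "Ent F = (\<Sum>x\<in>\<Omega>. w x * - log 2 (P (\<lambda>y. F y = F x)))"

lemma P_nonneg: "0 \<le> P E"
  unfolding P_def by (rule sum_nonneg) (auto intro: wnn)

lemma P_cong: "(\<And>x. x \<in> \<Omega> \<Longrightarrow> E x = E' x) \<Longrightarrow> P E = P E'"
  unfolding P_def by (rule sum.cong) auto

lemma P_mono: "(\<And>x. x \<in> \<Omega> \<Longrightarrow> E x \<Longrightarrow> E' x) \<Longrightarrow> P E \<le> P E'"
  unfolding P_def by (rule sum_mono) (auto intro: wnn)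

lemma P_ge: assumes "x \<in> \<Omega>" "E x" shows "w x \<le> P E"
proof -
  have "w x = (if E x then w x else 0)" using assms by simp
  also have "\<dots> \<le> P E" unfolding P_def
    by (rule member_le_sum[OF assms(1)]) (auto intro: wnn fin)
  finally show ?thesis .
qed

lemma P_pos: "x \<in> \<Omega> \<Longrightarrow> E x \<Longrightarrow> 0 < w x \<Longrightarrow> 0 < P E"
  using P_ge by fastforce

lemma P_split: "P E = P (\<lambda>x. E x \<and> G x) + P (\<lambda>x. E x \<and> \<not> G x)"
  unfolding P_def sum.distrib[symmetric] by (rule sum.cong) auto

lemma P_True: "P (\<lambda>x. True) = 1"
  unfolding P_def using wsum by simp

lemma P_eq_sum: "P E = sum w {x\<in>\<Omega>. E x}"
  unfolding P_def using fin by (simp add: sum.inter_filter)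

lemma P_marg: "P E = (\<Sum>a\<in>F ` \<Omega>. P (\<lambda>x. F x = a \<and> E x))"
proof -
  have "P E = (\<Sum>a\<in>F ` \<Omega>. \<Sum>x\<in>{x\<in>\<Omega>. F x = a}. if E x then w x else 0)"
    unfolding P_def using sum.image_gen[OF fin] by blast
  also have "\<dots> = (\<Sum>a\<in>F ` \<Omega>. P (\<lambda>x. F x = a \<and> E x))"
    unfolding P_def by (rule sum.cong[OF refl]) (auto simp: sum.inter_filter[OF fin] intro!: sum.cong)
  finally show ?thesis .
qed

lemma atom_sum: "(\<Sum>x\<in>\<Omega>. w x * \<phi> (\<tau> x)) = (\<Sum>t\<in>\<tau> ` \<Omega>. P (\<lambda>x. \<tau> x = t) * \<phi> t)"
proof -
  have "(\<Sum>x\<in>\<Omega>. w x * \<phi> (\<tau> x)) = (\<Sum>t\<in>\<tau> ` \<Omega>. \<Sum>x\<in>{x\<in>\<Omega>. \<tau> x = t}. w x * \<phi> (\<tau> x))"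
    using sum.image_gen[OF fin] by blast
  also have "\<dots> = (\<Sum>t\<in>\<tau> ` \<Omega>. \<Sum>x\<in>{x\<in>\<Omega>. \<tau> x = t}. w x * \<phi> t)"
    by (rule sum.cong[OF refl], rule sum.cong) auto
  also have "\<dots> = (\<Sum>t\<in>\<tau> ` \<Omega>. P (\<lambda>x. \<tau> x = t) * \<phi> t)"
    by (simp add: P_eq_sum sum_distrib_right)
  finally show ?thesis .
qed

lemma Ent_cong:
  assumes "\<And>x y. x \<in> \<Omega> \<Longrightarrow> y \<in> \<Omega> \<Longrightarrow> (F x = F y) = (G x = G y)"
  shows "Ent F = Ent G"
  unfolding Ent_def
proof (rule sum.cong[OF refl])
  fix x assume x: "x \<in> \<Omega>"
  have "P (\<lambda>y. F y = F x) = P (\<lambda>y. G y = G x)"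
    by (rule P_cong) (use assms x in auto)
  then show "w x * - log 2 (P (\<lambda>y. F y = F x)) = w x * - log 2 (P (\<lambda>y. G y = G x))" by simp
qed

lemma Ent_mono:
  assumes "\<And>x y. x \<in> \<Omega> \<Longrightarrow> y \<in> \<Omega> \<Longrightarrow> F x = F y \<Longrightarrow> G x = G y"
  shows "Ent G \<le> Ent F"
  unfolding Ent_def
proof (rule sum_mono)
  fix x assume x: "x \<in> \<Omega>"
  show "w x * - log 2 (P (\<lambda>y. G y = G x)) \<le> w x * - log 2 (P (\<lambda>y. F y = F x))"
  proof (cases "w x = 0")
    case False
    then have wp: "0 < w x" using wnn[OF x] by simp
    have p1: "0 < P (\<lambda>y. F y = F x)" using P_pos[OF x _ wp] by simp
    have "P (\<lambda>y. F y = F x) \<le> P (\<lambda>y. G y = G x)"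
      using assms[OF _ x] by (intro P_mono) blast
    then have "log 2 (P (\<lambda>y. F y = F x)) \<le> log 2 (P (\<lambda>y. G y = G x))"
      using p1 by simp
    then show ?thesis using wp by (simp add: mult_left_mono)
  qed simp
qed

lemma Ent_const: "Ent (\<lambda>x. c) = 0"
  unfolding Ent_def using P_True by simp

lemma gibbs:
  assumes "\<And>x. x \<in> \<Omega> \<Longrightarrow> 0 < w x \<Longrightarrow> 0 < r x" and "(\<Sum>x\<in>\<Omega>. w x * r x) \<le> 1"
  shows "(\<Sum>x\<in>\<Omega>. w x * log 2 (r x)) \<le> 0"
proof -
  have "(\<Sum>x\<in>\<Omega>. w x * log 2 (r x)) \<le> (\<Sum>x\<in>\<Omega>. w x * ((r x - 1) / ln 2))"
  proof (rule sum_mono)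
    fix x assume x: "x \<in> \<Omega>"
    show "w x * log 2 (r x) \<le> w x * ((r x - 1) / ln 2)"
    proof (cases "w x = 0")
      case False
      then have wp: "0 < w x" using wnn[OF x] by simp
      have "ln (r x) \<le> r x - 1" using ln_le_minus_one assms(1)[OF x wp] by simp
      then have "log 2 (r x) \<le> (r x - 1) / ln 2" unfolding log_def
        by (simp add: divide_right_mono)
      then show ?thesis using wp by (metis less_imp_le mult_left_mono times_divide_eq_right)
    qed simp
  qed
  also have "\<dots> = ((\<Sum>x\<in>\<Omega>. w x * r x) - 1) / ln 2"
  proof -
    have "(\<Sum>x\<in>\<Omega>. w x * ((r x - 1) / ln 2)) = (\<Sum>x\<in>\<Omega>. (w x * r x - w x) / ln 2)"
      by (rule sum.cong) (auto simp: algebra_simps)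
    also have "\<dots> = (\<Sum>x\<in>\<Omega>. w x * r x - w x) / ln 2"
      by (rule sum_divide_distrib[symmetric])
    also have "\<dots> = ((\<Sum>x\<in>\<Omega>. w x * r x) - 1) / ln 2"
      by (simp only: sum_subtractf wsum)
    finally show ?thesis .
  qed
  also have "\<dots> \<le> 0" using assms(2) by (simp add: divide_nonpos_pos)
  finally show ?thesis .
qed

end


context finprob begin

lemma sum_P_image: "(\<Sum>k\<in>K ` \<Omega>. P (\<lambda>y. K y = k)) = 1"
  using P_marg[of "\<lambda>x. True" K] P_True by simp

lemma Ent_bin:
  fixes K :: "'w \<Rightarrow> 'k" and Z :: "'w \<Rightarrow> bool"
  shows "Ent (\<lambda>x. (K x, Z x)) \<le> Ent K + 1"
proof -
  define pk where "pk x = P (\<lambda>y. K y = K x)" for x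
  define pkz where "pkz x = P (\<lambda>y. (K y, Z y) = (K x, Z x))" for x
  define r where "r x = pk x / (2 * pkz x)" for x
  have eq: "Ent (\<lambda>x. (K x, Z x)) - Ent K - 1 = (\<Sum>x\<in>\<Omega>. w x * log 2 (r x))"
  proof -
    have "Ent (\<lambda>x. (K x, Z x)) - Ent K - 1 = (\<Sum>x\<in>\<Omega>. w x * (- log 2 (pkz x)) - w x * (- log 2 (pk x)) - w x)"
      unfolding Ent_def pk_def pkz_def using wsum by (simp add: sum_subtractf sum_negf)
    also have "\<dots> = (\<Sum>x\<in>\<Omega>. w x * log 2 (r x))"
    proof (rule sum.cong[OF refl])
      fix x assume x: "x \<in> \<Omega>"
      show "w x * (- log 2 (pkz x)) - w x * (- log 2 (pk x)) - w x = w x * log 2 (r x)"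
      proof (cases "w x = 0")
        case False
        then have wp: "0 < w x" using wnn[OF x] by simp
        have a: "0 < pk x" unfolding pk_def using P_pos[OF x _ wp] by simp
        have b: "0 < pkz x" unfolding pkz_def using P_pos[OF x _ wp] by simp
        have "log 2 (r x) = log 2 (pk x) - 1 - log 2 (pkz x)"
          unfolding r_def using a b by (simp add: log_divide log_mult)
        then show ?thesis by (simp add: right_diff_distrib)
      qed simp
    qed
    finally show ?thesis .
  qed
  have "(\<Sum>x\<in>\<Omega>. w x * log 2 (r x)) \<le> 0"
  proof (rule gibbs)
    fix x assume x: "x \<in> \<Omega>" "0 < w x"
    show "0 < r x" unfolding r_def pk_def pkz_def using P_pos[OF x(1) _ x(2)] by simp
  next
    define \<tau> where "\<tau> x = (K x, Z x)" for x
    define \<phi> where "\<phi> t = P (\<lambda>y. K y = fst t) / (2 * P (\<lambda>y. \<tau> y = t))" for t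
    have "(\<Sum>x\<in>\<Omega>. w x * r x) = (\<Sum>x\<in>\<Omega>. w x * \<phi> (\<tau> x))"
      unfolding r_def \<phi>_def \<tau>_def pk_def pkz_def by simp
    also have "\<dots> = (\<Sum>t\<in>\<tau> ` \<Omega>. P (\<lambda>x. \<tau> x = t) * \<phi> t)" by (rule atom_sum)
    also have "\<dots> \<le> (\<Sum>t\<in>\<tau> ` \<Omega>. P (\<lambda>y. K y = fst t) / 2)"
    proof (rule sum_mono)
      fix t show "P (\<lambda>x. \<tau> x = t) * \<phi> t \<le> P (\<lambda>y. K y = fst t) / 2"
        unfolding \<phi>_def using P_nonneg[of "\<lambda>y. K y = fst t"] by (cases "P (\<lambda>x. \<tau> x = t) = 0") auto
    qed
    also have "\<dots> \<le> (\<Sum>t\<in>K ` \<Omega> \<times> (UNIV::bool set). P (\<lambda>y. K y = fst t) / 2)"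
      by (rule sum_mono2) (auto simp: \<tau>_def fin P_nonneg)
    also have "\<dots> = (\<Sum>k\<in>K ` \<Omega>. P (\<lambda>y. K y = k))"
      by (simp add: sum.cartesian_product' UNIV_bool)
    also have "\<dots> = 1" by (rule sum_P_image)
    finally show "(\<Sum>x\<in>\<Omega>. w x * r x) \<le> 1" .
  qed
  with eq show ?thesis by simp
qed

end


context finprob begin

lemma Ent_submod:
  fixes K :: "'w \<Rightarrow> 'k" and F :: "'w \<Rightarrow> 'f" and G :: "'w \<Rightarrow> 'g"
  shows "Ent (\<lambda>x. (K x, F x, G x)) + Ent K \<le> Ent (\<lambda>x. (K x, F x)) + Ent (\<lambda>x. (K x, G x))"
proof -
  define pk where "pk x = P (\<lambda>y. K y = K x)" for x
  define pkf where "pkf x = P (\<lambda>y. (K y, F y) = (K x, F x))" for x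
  define pkg where "pkg x = P (\<lambda>y. (K y, G y) = (K x, G x))" for x
  define p3 where "p3 x = P (\<lambda>y. (K y, F y, G y) = (K x, F x, G x))" for x
  define r where "r x = pkf x * pkg x / (p3 x * pk x)" for x
  have eq: "Ent (\<lambda>x. (K x, F x, G x)) + Ent K - Ent (\<lambda>x. (K x, F x)) - Ent (\<lambda>x. (K x, G x))
     = (\<Sum>x\<in>\<Omega>. w x * log 2 (r x))"
  proof -
    have "Ent (\<lambda>x. (K x, F x, G x)) + Ent K - Ent (\<lambda>x. (K x, F x)) - Ent (\<lambda>x. (K x, G x))
      = (\<Sum>x\<in>\<Omega>. w x * (- log 2 (p3 x)) + w x * (- log 2 (pk x)) - w x * (- log 2 (pkf x)) - w x * (- log 2 (pkg x)))"
      unfolding Ent_def pk_def pkf_def pkg_def p3_def by (simp add: sum_subtractf sum.distrib sum_negf)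
    also have "\<dots> = (\<Sum>x\<in>\<Omega>. w x * log 2 (r x))"
    proof (rule sum.cong[OF refl])
      fix x assume x: "x \<in> \<Omega>"
      show "w x * (- log 2 (p3 x)) + w x * (- log 2 (pk x)) - w x * (- log 2 (pkf x)) - w x * (- log 2 (pkg x)) = w x * log 2 (r x)"
      proof (cases "w x = 0")
        case False
        then have wp: "0 < w x" using wnn[OF x] by simp
        have a: "0 < pk x" "0 < pkf x" "0 < pkg x" "0 < p3 x"
          unfolding pk_def pkf_def pkg_def p3_def using P_pos[OF x _ wp] by simp_all
        have "log 2 (r x) = log 2 (pkf x) + log 2 (pkg x) - log 2 (p3 x) - log 2 (pk x)"
          unfolding r_def using a by (simp add: log_divide log_mult)
        then show ?thesis by (simp add: right_diff_distrib distrib_left)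
      qed simp
    qed
    finally show ?thesis .
  qed
  have "(\<Sum>x\<in>\<Omega>. w x * log 2 (r x)) \<le> 0"
  proof (rule gibbs)
    fix x assume x: "x \<in> \<Omega>" "0 < w x"
    show "0 < r x" unfolding r_def pk_def pkf_def pkg_def p3_def using P_pos[OF x(1) _ x(2)] by simp
  next
    define \<tau> where "\<tau> x = (K x, F x, G x)" for x
    define \<psi> where "\<psi> t = P (\<lambda>y. (K y, F y) = (fst t, fst (snd t))) * P (\<lambda>y. (K y, G y) = (fst t, snd (snd t)))
        / P (\<lambda>y. K y = fst t)" for t
    define \<phi> where "\<phi> t = \<psi> t / P (\<lambda>y. \<tau> y = t)" for t
    have psinn: "0 \<le> \<psi> t" for t unfolding \<psi>_def by (intro divide_nonneg_nonneg mult_nonneg_nonneg P_nonneg)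
    have "(\<Sum>x\<in>\<Omega>. w x * r x) = (\<Sum>x\<in>\<Omega>. w x * \<phi> (\<tau> x))"
      unfolding r_def \<phi>_def \<psi>_def \<tau>_def pk_def pkf_def pkg_def p3_def by (simp add: field_simps)
    also have "\<dots> = (\<Sum>t\<in>\<tau> ` \<Omega>. P (\<lambda>x. \<tau> x = t) * \<phi> t)" by (rule atom_sum)
    also have "\<dots> \<le> (\<Sum>t\<in>\<tau> ` \<Omega>. \<psi> t)"
    proof (rule sum_mono)
      fix t show "P (\<lambda>x. \<tau> x = t) * \<phi> t \<le> \<psi> t"
        unfolding \<phi>_def using psinn[of t] by (cases "P (\<lambda>x. \<tau> x = t) = 0") auto
    qed
    also have "\<dots> \<le> (\<Sum>t\<in>K ` \<Omega> \<times> F ` \<Omega> \<times> G ` \<Omega>. \<psi> t)"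
      by (rule sum_mono2) (auto simp: \<tau>_def fin psinn)
    also have "\<dots> = (\<Sum>k\<in>K ` \<Omega>. (\<Sum>f\<in>F ` \<Omega>. P (\<lambda>y. (K y, F y) = (k, f))) * (\<Sum>g\<in>G ` \<Omega>. P (\<lambda>y. (K y, G y) = (k, g)))
          / P (\<lambda>y. K y = k))"
      by (simp add: sum.cartesian_product' \<psi>_def sum_divide_distrib sum_product)
    also have "\<dots> = (\<Sum>k\<in>K ` \<Omega>. P (\<lambda>y. K y = k) * P (\<lambda>y. K y = k) / P (\<lambda>y. K y = k))"
    proof (rule sum.cong[OF refl])
      fix k
      have m1: "(\<Sum>f\<in>F ` \<Omega>. P (\<lambda>y. (K y, F y) = (k, f))) = P (\<lambda>y. K y = k)"
        by (subst P_marg[of _ F]) (auto intro!: sum.cong P_cong)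
      have m2: "(\<Sum>g\<in>G ` \<Omega>. P (\<lambda>y. (K y, G y) = (k, g))) = P (\<lambda>y. K y = k)"
        by (subst P_marg[of _ G]) (auto intro!: sum.cong P_cong)
      show "(\<Sum>f\<in>F ` \<Omega>. P (\<lambda>y. (K y, F y) = (k, f))) * (\<Sum>g\<in>G ` \<Omega>. P (\<lambda>y. (K y, G y) = (k, g))) / P (\<lambda>y. K y = k)
         = P (\<lambda>y. K y = k) * P (\<lambda>y. K y = k) / P (\<lambda>y. K y = k)" by (simp only: m1 m2)
    qed
    also have "\<dots> \<le> (\<Sum>k\<in>K ` \<Omega>. P (\<lambda>y. K y = k))"
      by (rule sum_mono) (simp add: P_nonneg)
    also have "\<dots> = 1" by (rule sum_P_image)
    finally show "(\<Sum>x\<in>\<Omega>. w x * r x) \<le> 1" .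
  qed
  with eq show ?thesis by simp
qed

end


lemma xor_poly:
  fixes a b c d :: real
  assumes "0 \<le> a" "0 \<le> b" "0 \<le> c" "0 \<le> d"
  shows "(a + b + c + d) * (a * a) \<le> (a + d) * (a + b) * (a + c)"
proof -
  have "(a + d) * (a + b) * (a + c) - (a + b + c + d) * (a * a) = a * (b * c + b * d + c * d) + b * c * d"
    by (simp add: algebra_simps)
  also have "\<dots> \<ge> 0" using assms by (intro add_nonneg_nonneg mult_nonneg_nonneg) auto
  finally show ?thesis by simp
qed

context finprob begin

lemma Ent_xor:
  fixes K :: "'w \<Rightarrow> 'k" and U V :: "'w \<Rightarrow> bool"
  shows "Ent (\<lambda>x. (K x, U x \<noteq> V x)) + Ent (\<lambda>x. (K x, U x)) + Ent (\<lambda>x. (K x, V x))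
     \<le> Ent K + 2 * Ent (\<lambda>x. (K x, U x, V x))"
proof -
  define p0 where "p0 x = P (\<lambda>y. K y = K x)" for x
  define pa where "pa x = P (\<lambda>y. (K y, U y) = (K x, U x))" for x
  define pb where "pb x = P (\<lambda>y. (K y, V y) = (K x, V x))" for x
  define pz where "pz x = P (\<lambda>y. (K y, U y \<noteq> V y) = (K x, U x \<noteq> V x))" for x
  define pc where "pc x = P (\<lambda>y. (K y, U y, V y) = (K x, U x, V x))" for x
  have pt: "w x * (- log 2 (pz x)) + w x * (- log 2 (pa x)) + w x * (- log 2 (pb x))
      \<le> w x * (- log 2 (p0 x)) + 2 * (w x * (- log 2 (pc x)))" if x: "x \<in> \<Omega>" for x
  proof (cases "w x = 0")
    case False
    then have wp: "0 < w x" using wnn[OF x] by simp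
    have pos: "0 < p0 x" "0 < pa x" "0 < pb x" "0 < pz x" "0 < pc x"
      unfolding p0_def pa_def pb_def pz_def pc_def using P_pos[OF x _ wp] by simp_all
    define q where "q u v = P (\<lambda>y. K y = K x \<and> U y = u \<and> V y = v)" for u v
    have qnn: "0 \<le> q u v" for u v unfolding q_def by (rule P_nonneg)
    have c: "pc x = q (U x) (V x)" unfolding pc_def q_def by (rule P_cong) auto
    have a: "pa x = q (U x) (V x) + q (U x) (\<not> V x)"
      unfolding pa_def q_def by (subst P_split[where G = "\<lambda>y. V y = V x"]) (auto intro!: arg_cong2[where f="(+)"] P_cong)
    have b: "pb x = q (U x) (V x) + q (\<not> U x) (V x)"
      unfolding pb_def q_def by (subst P_split[where G = "\<lambda>y. U y = U x"]) (auto intro!: arg_cong2[where f="(+)"] P_cong)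
    have z: "pz x = q (U x) (V x) + q (\<not> U x) (\<not> V x)"
      unfolding pz_def q_def by (subst P_split[where G = "\<lambda>y. U y = U x"]) (auto intro!: arg_cong2[where f="(+)"] P_cong)
    have o1: "p0 x = P (\<lambda>y. K y = K x \<and> U y = U x) + P (\<lambda>y. K y = K x \<and> U y = (\<not> U x))"
      unfolding p0_def by (subst P_split[where G = "\<lambda>y. U y = U x"]) (auto intro!: arg_cong2[where f="(+)"] P_cong)
    have o2: "P (\<lambda>y. K y = K x \<and> U y = u) = q u (V x) + q u (\<not> V x)" for u
      unfolding q_def by (subst P_split[where G = "\<lambda>y. V y = V x"]) (auto intro!: arg_cong2[where f="(+)"] P_cong)
    have o: "p0 x = q (U x) (V x) + q (U x) (\<not> V x) + q (\<not> U x) (V x) + q (\<not> U x) (\<not> V x)"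
      using o1 o2[of "U x"] o2[of "\<not> U x"] by simp
    have ineq: "p0 x * (pc x * pc x) \<le> pz x * pa x * pb x"
      unfolding o c a b z by (rule xor_poly) (simp_all add: qnn)
    have "log 2 (p0 x * (pc x * pc x)) \<le> log 2 (pz x * pa x * pb x)"
      using ineq pos by (subst log_le_cancel_iff) (auto intro!: mult_pos_pos)
    moreover have "log 2 (p0 x * (pc x * pc x)) = log 2 (p0 x) + 2 * log 2 (pc x)"
      using pos by (simp only: log_mult mult_pos_pos) simp
    moreover have "log 2 (pz x * pa x * pb x) = log 2 (pz x) + log 2 (pa x) + log 2 (pb x)"
      using pos by (simp only: log_mult mult_pos_pos) simp
    ultimately have "log 2 (p0 x) + 2 * log 2 (pc x) \<le> log 2 (pz x) + log 2 (pa x) + log 2 (pb x)"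
      by linarith
    then have "w x * (log 2 (p0 x) + 2 * log 2 (pc x)) \<le> w x * (log 2 (pz x) + log 2 (pa x) + log 2 (pb x))"
      using wp by (intro mult_left_mono) auto
    then show ?thesis by (simp add: algebra_simps)
  qed simp
  have "Ent (\<lambda>x. (K x, U x \<noteq> V x)) + Ent (\<lambda>x. (K x, U x)) + Ent (\<lambda>x. (K x, V x))
     = (\<Sum>x\<in>\<Omega>. w x * (- log 2 (pz x)) + w x * (- log 2 (pa x)) + w x * (- log 2 (pb x)))"
    unfolding Ent_def pz_def pa_def pb_def by (simp only: sum.distrib)
  also have "\<dots> \<le> (\<Sum>x\<in>\<Omega>. w x * (- log 2 (p0 x)) + 2 * (w x * (- log 2 (pc x))))"
    by (rule sum_mono) (rule pt)
  also have "\<dots> = Ent K + 2 * Ent (\<lambda>x. (K x, U x, V x))"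
    unfolding Ent_def p0_def pc_def by (simp only: sum.distrib sum_distrib_left)
  finally show ?thesis .
qed

end


definition gfun :: "int \<Rightarrow> int \<Rightarrow> int \<Rightarrow> int" where
  "gfun \<alpha> \<beta> \<gamma> = (if \<gamma> = 0 then 0 else if \<gamma> = 2 then 1 else if \<alpha> = 0 \<or> \<beta> = 0 then 1 else 0)"

lemma int01: assumes "\<bar>t - real_of_int a\<bar> \<le> d" "0 \<le> t" "t \<le> 1" "d < 1/4"
  shows "a = 0 \<or> a = 1"
proof -
  have "real_of_int a > -1" "real_of_int a < 2" using assms by linarith+
  then have "a > -1" "a < 2" by linarith+
  then show ?thesis by linarith
qed

lemma int012: assumes "\<bar>t - real_of_int a\<bar> \<le> d" "0 \<le> t" "t \<le> 2" "d < 1/4"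
  shows "a = 0 \<or> a = 1 \<or> a = 2"
proof -
  have "real_of_int a > -1" "real_of_int a < 3" using assms by linarith+
  then have "a > -1" "a < 3" by linarith+
  then show ?thesis by linarith
qed

context finprob begin

lemma core:
  fixes K :: "'w \<Rightarrow> 'k" and U V :: "'w \<Rightarrow> bool" and \<alpha> \<beta> \<gamma> :: int
  assumes ha: "\<bar>Ent (\<lambda>x. (K x, U x)) - Ent K - \<alpha>\<bar> \<le> d"
    and hb: "\<bar>Ent (\<lambda>x. (K x, V x)) - Ent K - \<beta>\<bar> \<le> d"
    and hc: "\<bar>Ent (\<lambda>x. (K x, U x, V x)) - Ent K - \<gamma>\<bar> \<le> d"
    and hd: "d < 1/4"
  shows "\<bar>Ent (\<lambda>x. (K x, U x \<noteq> V x)) - Ent K - gfun \<alpha> \<beta> \<gamma>\<bar> \<le> 4 * d"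
proof -
  define y0 where "y0 = Ent K"
  define a where "a = Ent (\<lambda>x. (K x, U x))"
  define b where "b = Ent (\<lambda>x. (K x, V x))"
  define c where "c = Ent (\<lambda>x. (K x, U x, V x))"
  define z where "z = Ent (\<lambda>x. (K x, U x \<noteq> V x))"
  have m1: "y0 \<le> a" "y0 \<le> b" "y0 \<le> z" "a \<le> c" "b \<le> c" "z \<le> c"
    unfolding y0_def a_def b_def c_def z_def by (rule Ent_mono; auto)+
  have b1: "a \<le> y0 + 1" "b \<le> y0 + 1" "z \<le> y0 + 1"
    unfolding y0_def a_def b_def z_def by (rule Ent_bin)+
  have "Ent (\<lambda>x. ((K x, U x), V x)) \<le> Ent (\<lambda>x. (K x, U x)) + 1" by (rule Ent_bin)
  moreover have "Ent (\<lambda>x. ((K x, U x), V x)) = c" unfolding c_def by (rule Ent_cong) auto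
  ultimately have b2: "c \<le> a + 1" unfolding a_def by simp
  have "Ent (\<lambda>x. ((K x, U x \<noteq> V x), U x)) \<le> Ent (\<lambda>x. (K x, U x \<noteq> V x)) + 1" by (rule Ent_bin)
  moreover have "Ent (\<lambda>x. ((K x, U x \<noteq> V x), U x)) = c" unfolding c_def by (rule Ent_cong) auto
  ultimately have b3: "c \<le> z + 1" unfolding z_def by simp
  have "Ent (\<lambda>x. (K x, U x \<noteq> V x, U x)) + Ent K \<le> Ent (\<lambda>x. (K x, U x \<noteq> V x)) + Ent (\<lambda>x. (K x, U x))"
    by (rule Ent_submod)
  moreover have "Ent (\<lambda>x. (K x, U x \<noteq> V x, U x)) = c" unfolding c_def by (rule Ent_cong) auto
  ultimately have s1: "c + y0 \<le> z + a" unfolding z_def a_def y0_def by simp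
  have "Ent (\<lambda>x. (K x, U x \<noteq> V x, V x)) + Ent K \<le> Ent (\<lambda>x. (K x, U x \<noteq> V x)) + Ent (\<lambda>x. (K x, V x))"
    by (rule Ent_submod)
  moreover have "Ent (\<lambda>x. (K x, U x \<noteq> V x, V x)) = c" unfolding c_def by (rule Ent_cong) auto
  ultimately have s2: "c + y0 \<le> z + b" unfolding z_def b_def y0_def by simp
  have x1: "z + a + b \<le> y0 + 2 * c" unfolding z_def a_def b_def y0_def c_def by (rule Ent_xor)
  have ha': "\<bar>a - y0 - \<alpha>\<bar> \<le> d" and hb': "\<bar>b - y0 - \<beta>\<bar> \<le> d" and hc': "\<bar>c - y0 - \<gamma>\<bar> \<le> d"
    using ha hb hc unfolding a_def b_def c_def y0_def by auto
  have "\<bar>a - y0 - \<alpha>\<bar> = \<bar>(a - y0) - \<alpha>\<bar>" by simp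
  have A: "\<alpha> = 0 \<or> \<alpha> = 1" by (rule int01[of "a - y0" _ d]) (use ha' m1 b1 hd in auto)
  have B: "\<beta> = 0 \<or> \<beta> = 1" by (rule int01[of "b - y0" _ d]) (use hb' m1 b1 hd in auto)
  have C: "\<gamma> = 0 \<or> \<gamma> = 1 \<or> \<gamma> = 2" by (rule int012[of "c - y0" _ d]) (use hc' m1 b1 b2 hd in auto)
  have "\<bar>z - y0 - gfun \<alpha> \<beta> \<gamma>\<bar> \<le> 4 * d"
    using A B C ha' hb' hc' m1 b1 b2 b3 s1 s2 x1 hd unfolding gfun_def
    by (elim disjE) (simp_all add: abs_le_iff; linarith)+
  then show ?thesis unfolding z_def y0_def .
qed

end


definition stepk :: "nat \<Rightarrow> nat \<Rightarrow> (nat set \<Rightarrow> int) \<Rightarrow> nat set \<Rightarrow> int" where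
  "stepk i j k A = (if i \<in> A \<and> j \<notin> A then
     k (A - {i}) + gfun (k A - k (A - {i})) (k (insert j (A - {i})) - k (A - {i})) (k (insert j A) - k (A - {i}))
   else k A)"

primrec iterk :: "nat \<Rightarrow> (nat set \<Rightarrow> int) \<Rightarrow> nat list \<Rightarrow> nat set \<Rightarrow> int" where
  "iterk i k [] = k"
| "iterk i k (j # js) = stepk i j (iterk i k js)"

primrec Rl :: "nat \<Rightarrow> (nat \<Rightarrow> 'w \<Rightarrow> bool) \<Rightarrow> nat list \<Rightarrow> nat \<Rightarrow> 'w \<Rightarrow> bool" where
  "Rl i R [] = R"
| "Rl i R (j # js) = (Rl i R js)(i := (\<lambda>x. Rl i R js i x \<noteq> Rl i R js j x))"

lemma Rl_other: "l \<noteq> i \<Longrightarrow> Rl i R js l = R l"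
  by (induction js) auto

definition Tup :: "(nat \<Rightarrow> 'w \<Rightarrow> bool) \<Rightarrow> nat set \<Rightarrow> 'w \<Rightarrow> (nat \<Rightarrow> bool)" where
  "Tup R A x = (\<lambda>l. l \<in> A \<and> R l x)"

lemma Tup_insert: "i \<notin> B \<Longrightarrow> (Tup R (insert i B) x = Tup R (insert i B) y) = (Tup R B x = Tup R B y \<and> R i x = R i y)"
  unfolding Tup_def fun_eq_iff
proof
  assume h: "\<forall>l. (l \<in> insert i B \<and> R l x) = (l \<in> insert i B \<and> R l y)"
  have "R i x = R i y" using spec[OF h, of i] by simp
  moreover have "\<forall>l. (l \<in> B \<and> R l x) = (l \<in> B \<and> R l y)"
  proof
    fix l show "(l \<in> B \<and> R l x) = (l \<in> B \<and> R l y)" using spec[OF h, of l] by auto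
  qed
  ultimately show "(\<forall>l. (l \<in> B \<and> R l x) = (l \<in> B \<and> R l y)) \<and> R i x = R i y" by blast
next
  assume h: "(\<forall>l. (l \<in> B \<and> R l x) = (l \<in> B \<and> R l y)) \<and> R i x = R i y"
  show "\<forall>l. (l \<in> insert i B \<and> R l x) = (l \<in> insert i B \<and> R l y)"
  proof
    fix l show "(l \<in> insert i B \<and> R l x) = (l \<in> insert i B \<and> R l y)"
      using h by (cases "l = i") auto
  qed
qed

lemma Tup_cong: "(\<And>l. l \<in> A \<Longrightarrow> R l = R' l) \<Longrightarrow> Tup R A = Tup R' A"
  unfolding Tup_def fun_eq_iff by auto

context finprob begin

definition Qv :: "('w \<Rightarrow> 'y) \<Rightarrow> (nat \<Rightarrow> 'w \<Rightarrow> bool) \<Rightarrow> nat set \<Rightarrow> real" where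
  "Qv Y R A = Ent (\<lambda>x. (Y x, Tup R A x)) - Ent Y"

lemma step:
  assumes inv: "\<forall>A\<subseteq>I. \<bar>Qv Y R A - k A\<bar> \<le> e" and ij: "i \<in> I" "j \<in> I" "i \<noteq> j" and e: "e < 1/8"
  shows "\<forall>A\<subseteq>I. \<bar>Qv Y (R(i := \<lambda>x. R i x \<noteq> R j x)) A - stepk i j k A\<bar> \<le> 9 * e"
proof (intro allI impI)
  fix A assume AI: "A \<subseteq> I"
  define R' where "R' = R(i := \<lambda>x. R i x \<noteq> R j x)"
  have e0: "0 \<le> e" using inv by (meson abs_ge_zero empty_subsetI order.trans)
  show "\<bar>Qv Y R' A - stepk i j k A\<bar> \<le> 9 * e"
  proof (cases "i \<in> A")
    case False
    have "Tup R' A = Tup R A" by (rule Tup_cong) (use False in \<open>auto simp: R'_def\<close>)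
    then have "Qv Y R' A = Qv Y R A" unfolding Qv_def by simp
    moreover have "stepk i j k A = k A" unfolding stepk_def using False by simp
    ultimately show ?thesis using inv[rule_format, OF AI] e0 by simp
  next
    case iA: True
    show ?thesis
    proof (cases "j \<in> A")
      case jA: True
      define C where "C = A - {i, j}"
      have AC: "A = insert i (insert j C)" "i \<notin> insert j C" "j \<notin> C" using iA jA ij unfolding C_def by auto
      have TC: "Tup R' C = Tup R C" by (rule Tup_cong) (auto simp: R'_def C_def)
      have "Ent (\<lambda>x. (Y x, Tup R' A x)) = Ent (\<lambda>x. (Y x, Tup R A x))"
      proof (rule Ent_cong)
        fix x y
        show "((Y x, Tup R' A x) = (Y y, Tup R' A y)) = ((Y x, Tup R A x) = (Y y, Tup R A y))"
          unfolding AC(1) prod.inject Tup_insert[OF AC(2)] Tup_insert[OF AC(3)] TC using ij by (auto simp: R'_def)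
      qed
      then have "Qv Y R' A = Qv Y R A" unfolding Qv_def by simp
      moreover have "stepk i j k A = k A" unfolding stepk_def using jA by simp
      ultimately show ?thesis using inv[rule_format, OF AI] e0 by simp
    next
      case jA: False
      define B where "B = A - {i}"
      have AB: "A = insert i B" "i \<notin> B" "j \<notin> B" "i \<notin> insert j B" using iA jA ij unfolding B_def by auto
      define K where "K x = (Y x, Tup R B x)" for x
      have TB: "Tup R' B = Tup R B" by (rule Tup_cong) (auto simp: R'_def B_def)
      have E0: "Ent K = Qv Y R B + Ent Y" unfolding Qv_def K_def by simp
      have E1: "Ent (\<lambda>x. (K x, R i x)) = Qv Y R A + Ent Y"
      proof -
        have "Ent (\<lambda>x. (K x, R i x)) = Ent (\<lambda>x. (Y x, Tup R A x))"
          by (rule Ent_cong) (auto simp: K_def AB(1) Tup_insert[OF AB(2)])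
        then show ?thesis unfolding Qv_def by simp
      qed
      have E2: "Ent (\<lambda>x. (K x, R j x)) = Qv Y R (insert j B) + Ent Y"
      proof -
        have "Ent (\<lambda>x. (K x, R j x)) = Ent (\<lambda>x. (Y x, Tup R (insert j B) x))"
          by (rule Ent_cong) (auto simp: K_def Tup_insert[OF AB(3)])
        then show ?thesis unfolding Qv_def by simp
      qed
      have E3: "Ent (\<lambda>x. (K x, R i x, R j x)) = Qv Y R (insert j A) + Ent Y"
      proof -
        have "insert j A = insert i (insert j B)" using AB by auto
        then have "Ent (\<lambda>x. (K x, R i x, R j x)) = Ent (\<lambda>x. (Y x, Tup R (insert j A) x))"
          by (intro Ent_cong) (auto simp: K_def Tup_insert[OF AB(4)] Tup_insert[OF AB(3)])
        then show ?thesis unfolding Qv_def by simp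
      qed
      have E4: "Ent (\<lambda>x. (K x, R i x \<noteq> R j x)) = Qv Y R' A + Ent Y"
      proof -
        have "Ent (\<lambda>x. (K x, R i x \<noteq> R j x)) = Ent (\<lambda>x. (Y x, Tup R' A x))"
          by (rule Ent_cong) (unfold K_def AB(1) prod.inject Tup_insert[OF AB(2)] TB, auto simp: R'_def)
        then show ?thesis unfolding Qv_def by simp
      qed
      have sub: "B \<subseteq> I" "insert j B \<subseteq> I" "insert j A \<subseteq> I" using AI ij unfolding B_def by auto
      have iB: "\<bar>Qv Y R B - k B\<bar> \<le> e" "\<bar>Qv Y R A - k A\<bar> \<le> e" "\<bar>Qv Y R (insert j B) - k (insert j B)\<bar> \<le> e"
        "\<bar>Qv Y R (insert j A) - k (insert j A)\<bar> \<le> e" using inv sub AI by auto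
      have c: "\<bar>Ent (\<lambda>x. (K x, R i x \<noteq> R j x)) - Ent K - gfun (k A - k B) (k (insert j B) - k B) (k (insert j A) - k B)\<bar> \<le> 4 * (2 * e)"
        by (rule core) (use iB e in \<open>simp_all add: E0 E1 E2 E3 abs_le_iff; linarith\<close>)+
      have "stepk i j k A = k B + gfun (k A - k B) (k (insert j B) - k B) (k (insert j A) - k B)"
        unfolding stepk_def B_def using iA jA by simp
      then show ?thesis using c iB(1) unfolding E0 E4 by (simp add: abs_le_iff; linarith)
    qed
  qed
qed

lemma iter:
  assumes inv: "\<forall>A\<subseteq>I. \<bar>Qv Y R A - k A\<bar> \<le> e" and i: "i \<in> I" and js: "set js \<subseteq> I" "i \<notin> set js"
    and e: "9 ^ length js * e < 1/8"
  shows "\<forall>A\<subseteq>I. \<bar>Qv Y (Rl i R js) A - iterk i k js A\<bar> \<le> 9 ^ length js * e"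
  using js e
proof (induction js)
  case Nil
  then show ?case using inv by simp
next
  case (Cons j js)
  have e0: "0 \<le> e" using inv by (meson abs_ge_zero empty_subsetI order.trans)
  have "9 ^ length js * e \<le> 9 ^ length (j # js) * e" using e0 by (simp add: mult_right_mono)
  then have "9 ^ length js * e < 1/8" using Cons.prems by linarith
  then have IH: "\<forall>A\<subseteq>I. \<bar>Qv Y (Rl i R js) A - iterk i k js A\<bar> \<le> 9 ^ length js * e"
    using Cons by auto
  have "\<forall>A\<subseteq>I. \<bar>Qv Y ((Rl i R js)(i := \<lambda>x. Rl i R js i x \<noteq> Rl i R js j x)) A - stepk i j (iterk i k js) A\<bar> \<le> 9 * (9 ^ length js * e)"
    by (rule step[OF IH i]) (use Cons.prems \<open>9 ^ length js * e < 1/8\<close> in auto)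
  then show ?case by (simp add: mult.assoc fun_upd_def)
qed

end


context finprob begin

lemma MI:
  "(\<Sum>a\<in>F ` \<Omega>. \<Sum>b\<in>G ` \<Omega>.
        let pab = P (\<lambda>\<omega>. F \<omega> = a \<and> G \<omega> = b);
            pa = P (\<lambda>\<omega>. F \<omega> = a);
            pb = P (\<lambda>\<omega>. G \<omega> = b)
        in if pab = 0 then 0 else pab * log 2 (pab / (pa * pb)))
   = Ent F + Ent G - Ent (\<lambda>x. (F x, G x))"
proof -
  define \<tau> where "\<tau> x = (F x, G x)" for x
  define L where "L t = log 2 (P (\<lambda>\<omega>. \<tau> \<omega> = t)) - log 2 (P (\<lambda>\<omega>. F \<omega> = fst t)) - log 2 (P (\<lambda>\<omega>. G \<omega> = snd t))" for t
  have t1: "(let pab = P (\<lambda>\<omega>. F \<omega> = a \<and> G \<omega> = b);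
            pa = P (\<lambda>\<omega>. F \<omega> = a);
            pb = P (\<lambda>\<omega>. G \<omega> = b)
        in if pab = 0 then 0 else pab * log 2 (pab / (pa * pb))) = P (\<lambda>\<omega>. \<tau> \<omega> = (a, b)) * L (a, b)" for a b
  proof -
    have e: "P (\<lambda>\<omega>. F \<omega> = a \<and> G \<omega> = b) = P (\<lambda>\<omega>. \<tau> \<omega> = (a, b))" unfolding \<tau>_def by simp
    show ?thesis
    proof (cases "P (\<lambda>\<omega>. \<tau> \<omega> = (a, b)) = 0")
      case False
      then have p: "0 < P (\<lambda>\<omega>. \<tau> \<omega> = (a, b))" using P_nonneg[of "\<lambda>\<omega>. \<tau> \<omega> = (a, b)"] by simp
      have "P (\<lambda>\<omega>. \<tau> \<omega> = (a, b)) \<le> P (\<lambda>\<omega>. F \<omega> = a)" by (rule P_mono) (auto simp: \<tau>_def)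
      then have pa: "0 < P (\<lambda>\<omega>. F \<omega> = a)" using p by linarith
      have "P (\<lambda>\<omega>. \<tau> \<omega> = (a, b)) \<le> P (\<lambda>\<omega>. G \<omega> = b)" by (rule P_mono) (auto simp: \<tau>_def)
      then have pb: "0 < P (\<lambda>\<omega>. G \<omega> = b)" using p by linarith
      have "log 2 (P (\<lambda>\<omega>. \<tau> \<omega> = (a, b)) / (P (\<lambda>\<omega>. F \<omega> = a) * P (\<lambda>\<omega>. G \<omega> = b))) = L (a, b)"
        unfolding L_def using p pa pb by (simp add: log_divide log_mult)
      then show ?thesis using False unfolding e Let_def by simp
    qed (simp add: e)
  qed
  have "(\<Sum>a\<in>F ` \<Omega>. \<Sum>b\<in>G ` \<Omega>. P (\<lambda>\<omega>. \<tau> \<omega> = (a, b)) * L (a, b))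
      = (\<Sum>t\<in>F ` \<Omega> \<times> G ` \<Omega>. P (\<lambda>\<omega>. \<tau> \<omega> = t) * L t)"
    by (simp add: sum.cartesian_product')
  also have "\<dots> = (\<Sum>t\<in>\<tau> ` \<Omega>. P (\<lambda>\<omega>. \<tau> \<omega> = t) * L t)"
  proof (rule sum.mono_neutral_right)
    show "finite (F ` \<Omega> \<times> G ` \<Omega>)" using fin by simp
    show "\<tau> ` \<Omega> \<subseteq> F ` \<Omega> \<times> G ` \<Omega>" by (auto simp: \<tau>_def)
    show "\<forall>t\<in>F ` \<Omega> \<times> G ` \<Omega> - \<tau> ` \<Omega>. P (\<lambda>\<omega>. \<tau> \<omega> = t) * L t = 0"
    proof
      fix t assume "t \<in> F ` \<Omega> \<times> G ` \<Omega> - \<tau> ` \<Omega>"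
      then have "\<And>x. x \<in> \<Omega> \<Longrightarrow> \<tau> x \<noteq> t" by (metis DiffD2 image_eqI)
      then have "P (\<lambda>\<omega>. \<tau> \<omega> = t) = 0" unfolding P_def by (intro sum.neutral) auto
      then show "P (\<lambda>\<omega>. \<tau> \<omega> = t) * L t = 0" by simp
    qed
  qed
  also have "\<dots> = (\<Sum>x\<in>\<Omega>. w x * L (\<tau> x))" by (rule atom_sum[symmetric])
  also have "\<dots> = Ent F + Ent G - Ent (\<lambda>x. (F x, G x))"
    unfolding Ent_def L_def \<tau>_def by (simp add: sum_subtractf sum_negf right_diff_distrib)
  finally show ?thesis using t1 by simp
qed

end

lemma users_card: "card (users m) = m" and users_fin: "finite (users m)"
  unfolding users_def by auto

lemma inputs_bij: "bij_betw (\<lambda>x. {i. x i}) (inputs m) (Pow (users m))"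
  by (rule bij_betw_byWitness[where f' = "\<lambda>A i. i \<in> A"]) (auto simp: inputs_def)

lemma inputs_card: "card (inputs m) = 2 ^ m" and inputs_fin: "finite (inputs m)"
proof -
  have "card (inputs m) = card (Pow (users m))" using bij_betw_same_card[OF inputs_bij] .
  then show "card (inputs m) = 2 ^ m" by (simp add: card_Pow users_card users_fin)
  show "finite (inputs m)" using bij_betw_finite[OF inputs_bij] users_fin by simp
qed

locale mac =
  fixes m :: nat and Out :: "nat set" and W :: "(nat \<Rightarrow> bool) \<Rightarrow> nat \<Rightarrow> real"
  assumes bm: "binary_mac m Out W"

sublocale mac \<subseteq> finprob "omega m Out" "\<lambda>\<omega>. W (fst \<omega>) (snd \<omega>) / 2 ^ m"
proof
  have fo: "finite Out" using bm unfolding binary_mac_def by simp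
  show "finite (omega m Out)" unfolding omega_def using fo inputs_fin by simp
  show "0 \<le> W (fst x) (snd x) / 2 ^ m" if "x \<in> omega m Out" for x
    using that bm unfolding binary_mac_def omega_def by auto
  have "(\<Sum>x\<in>omega m Out. W (fst x) (snd x) / 2 ^ m) = (\<Sum>a\<in>inputs m. (\<Sum>y\<in>Out. W a y) / 2 ^ m)"
    unfolding omega_def by (simp add: sum.cartesian_product' sum_divide_distrib)
  also have "\<dots> = (\<Sum>a\<in>inputs m. 1 / 2 ^ m)"
    by (rule sum.cong) (use bm in \<open>auto simp: binary_mac_def\<close>)
  also have "\<dots> = 1" by (simp add: inputs_card)
  finally show "(\<Sum>x\<in>omega m Out. W (fst x) (snd x) / 2 ^ m) = 1" .
qed

context mac begin

lemma prob_ev_P: "prob_ev m Out W = P"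
  unfolding prob_ev_def P_def fun_eq_iff by simp

lemma mi: "mutual_info m Out W F G = Ent F + Ent G - Ent (\<lambda>x. (F x, G x))"
  unfolding mutual_info_def prob_ev_P by (rule MI)

end


lemma card_agree:
  assumes S: "S \<subseteq> users m" and x0: "x0 \<in> inputs m"
  shows "card {x\<in>inputs m. \<forall>i\<in>S. x i = x0 i} = 2 ^ (m - card S)"
proof -
  have "bij_betw (\<lambda>x. {i\<in>users m - S. x i}) {x\<in>inputs m. \<forall>i\<in>S. x i = x0 i} (Pow (users m - S))"
  proof (rule bij_betw_byWitness[where f' = "\<lambda>T i. i \<in> T \<or> (i \<in> S \<and> x0 i)"])
    show "\<forall>a\<in>{x \<in> inputs m. \<forall>i\<in>S. x i = x0 i}. (\<lambda>i. i \<in> {i \<in> users m - S. a i} \<or> i \<in> S \<and> x0 i) = a"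
      using S by (auto simp: inputs_def fun_eq_iff)
    show "\<forall>a'\<in>Pow (users m - S). {i \<in> users m - S. i \<in> a' \<or> i \<in> S \<and> x0 i} = a'"
      by auto
    show "(\<lambda>x. {i \<in> users m - S. x i}) ` {x \<in> inputs m. \<forall>i\<in>S. x i = x0 i} \<subseteq> Pow (users m - S)"
      by auto
    show "(\<lambda>T i. i \<in> T \<or> i \<in> S \<and> x0 i) ` Pow (users m - S) \<subseteq> {x \<in> inputs m. \<forall>i\<in>S. x i = x0 i}"
      using S x0 by (auto simp: inputs_def)
  qed
  then have "card {x\<in>inputs m. \<forall>i\<in>S. x i = x0 i} = card (Pow (users m - S))"
    by (rule bij_betw_same_card)
  also have "\<dots> = 2 ^ (m - card S)"
    using S by (simp add: card_Pow users_fin card_Diff_subset finite_subset[OF S users_fin] users_card)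
  finally show ?thesis .
qed

lemma parity_flip:
  assumes "finite S" "i0 \<in> S"
  shows "odd (card {i\<in>S. (x(i0 := \<not> x i0)) i}) = (\<not> odd (card {i\<in>S. x i}))"
proof (cases "x i0")
  case True
  have "{i\<in>S. (x(i0 := \<not> x i0)) i} = {i\<in>S. x i} - {i0}" using True by auto
  moreover have "card ({i\<in>S. x i} - {i0}) = card {i\<in>S. x i} - 1"
    using True assms by (intro card_Diff_singleton) auto
  moreover have "card {i\<in>S. x i} > 0" using assms True by (auto simp: card_gt_0_iff)
  ultimately show ?thesis by (cases "card {i\<in>S. x i}") (simp_all del: fun_upd_apply)
next
  case False
  have "{i\<in>S. (x(i0 := \<not> x i0)) i} = insert i0 {i\<in>S. x i}" using False assms by auto
  moreover have "card (insert i0 {i\<in>S. x i}) = Suc (card {i\<in>S. x i})"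
    using False assms by (intro card_insert_disjoint) auto
  ultimately show ?thesis by (simp del: fun_upd_apply)
qed

lemma card_parity:
  assumes S: "S \<subseteq> users m" "S \<noteq> {}"
  shows "card {x\<in>inputs m. odd (card {i\<in>S. x i}) = b} = 2 ^ (m - 1)"
proof -
  obtain i0 where i0: "i0 \<in> S" using S by auto
  have fS: "finite S" using S users_fin finite_subset by blast
  define Ob where "Ob b = {x\<in>inputs m. odd (card {i\<in>S. x i}) = b}" for b
  define fl where "fl x = x(i0 := \<not> x i0)" for x :: "nat \<Rightarrow> bool"
  have flin: "x \<in> inputs m \<Longrightarrow> fl x \<in> inputs m" for x using i0 S unfolding fl_def inputs_def by auto
  have fl2: "fl (fl x) = x" for x unfolding fl_def by auto
  have pf: "even (card {i\<in>S. fl x i}) = odd (card {i\<in>S. x i})" for x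
    using parity_flip[OF fS i0, of x] unfolding fl_def by blast
  have bj: "bij_betw fl (Ob b) (Ob (\<not> b))" for b
  proof (rule bij_betw_byWitness[where f' = fl])
    show "\<forall>a\<in>Ob b. fl (fl a) = a" using fl2 by blast
    show "\<forall>a\<in>Ob (\<not> b). fl (fl a) = a" using fl2 by blast
    show "fl ` Ob b \<subseteq> Ob (\<not> b)"
    proof
      fix z assume "z \<in> fl ` Ob b"
      then obtain x where x: "x \<in> Ob b" "z = fl x" by blast
      then show "z \<in> Ob (\<not> b)" unfolding Ob_def using flin pf[of x] by auto
    qed
    show "fl ` Ob (\<not> b) \<subseteq> Ob b"
    proof
      fix z assume "z \<in> fl ` Ob (\<not> b)"
      then obtain x where x: "x \<in> Ob (\<not> b)" "z = fl x" by blast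
      then show "z \<in> Ob b" unfolding Ob_def using flin pf[of x] by auto
    qed
  qed
  have eqc: "card (Ob True) = card (Ob False)" using bij_betw_same_card[OF bj[of True]] by simp
  have "Ob True \<union> Ob False = inputs m" "Ob True \<inter> Ob False = {}" unfolding Ob_def by auto
  moreover have fO: "finite (Ob True)" "finite (Ob False)" unfolding Ob_def using inputs_fin by auto
  ultimately have "card (Ob True) + card (Ob False) = 2 ^ m"
    using card_Un_disjoint[of "Ob True" "Ob False"] inputs_card by simp
  moreover have "card S \<le> m" using card_mono[OF users_fin S(1)] users_card by simp
  moreover have "card S > 0" using fS i0 by (auto simp: card_gt_0_iff)
  ultimately obtain k where k: "m = Suc k" "card (Ob True) + card (Ob False) = 2 * 2 ^ k"
    by (metis Suc_pred less_le_trans power_Suc)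
  then have "card (Ob True) = 2 ^ (m - 1)" "card (Ob False) = 2 ^ (m - 1)" using eqc by simp_all
  then show ?thesis unfolding Ob_def by (cases b) auto
qed

lemma log_pow_ratio:
  assumes "s \<le> m"
  shows "- log 2 ((2::real) ^ (m - s) / 2 ^ m) = s"
proof -
  have "(2::real) ^ m = 2 ^ (m - s) * 2 ^ s" using assms by (simp add: power_add[symmetric])
  then have "(2::real) ^ (m - s) / 2 ^ m = 1 / 2 ^ s" by simp
  moreover have "log 2 (1 / (2::real) ^ s) = - s" by (simp add: log_divide log_nat_power)
  ultimately show ?thesis by simp
qed

context mac begin

lemma P_input: "P (\<lambda>\<eta>. F (fst \<eta>) = v) = card {x\<in>inputs m. F x = v} / 2 ^ m"
proof -
  have "P (\<lambda>\<eta>. F (fst \<eta>) = v) = (\<Sum>x\<in>inputs m. \<Sum>y\<in>Out. if F x = v then W x y / 2 ^ m else 0)"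
    unfolding P_def unfolding omega_def sum.cartesian_product' fst_conv snd_conv by (rule refl)
  also have "\<dots> = (\<Sum>x\<in>inputs m. if F x = v then 1 / 2 ^ m else 0)"
    by (rule sum.cong) (use bm in \<open>auto simp: binary_mac_def sum_divide_distrib[symmetric]\<close>)
  also have "\<dots> = card {x\<in>inputs m. F x = v} / 2 ^ m"
    by (simp add: sum.inter_filter[OF inputs_fin, symmetric])
  finally show ?thesis .
qed

lemma Ent_input:
  assumes "\<And>x. x \<in> inputs m \<Longrightarrow> card {z\<in>inputs m. F z = F x} = N"
  shows "Ent (\<lambda>\<eta>. F (fst \<eta>)) = - log 2 (N / 2 ^ m)"
proof -
  have "Ent (\<lambda>\<eta>. F (fst \<eta>)) = (\<Sum>\<eta>\<in>omega m Out. W (fst \<eta>) (snd \<eta>) / 2 ^ m * - log 2 (N / 2 ^ m))"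
    unfolding Ent_def
  proof (rule sum.cong[OF refl])
    fix \<eta> assume "\<eta> \<in> omega m Out"
    then have "fst \<eta> \<in> inputs m" unfolding omega_def by auto
    then show "W (fst \<eta>) (snd \<eta>) / 2 ^ m * - log 2 (P (\<lambda>y. F (fst y) = F (fst \<eta>))) =
         W (fst \<eta>) (snd \<eta>) / 2 ^ m * - log 2 (N / 2 ^ m)"
      by (simp add: P_input assms)
  qed
  also have "\<dots> = - log 2 (N / 2 ^ m)" by (simp only: sum_distrib_right[symmetric] wsum mult_1)
  finally show ?thesis .
qed

lemma Ent_Xsub: assumes S: "S \<subseteq> users m" shows "Ent (Xsub S) = card S"
proof -
  have "Xsub S = (\<lambda>\<eta>. (\<lambda>x i. x i \<and> i \<in> S) (fst \<eta>))" unfolding Xsub_def by simp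
  moreover have "Ent (\<lambda>\<eta>. (\<lambda>x i. x i \<and> i \<in> S) (fst \<eta>)) = - log 2 (real (2 ^ (m - card S)) / 2 ^ m)"
  proof (rule Ent_input[where F = "\<lambda>x i. x i \<and> i \<in> S"])
    fix x assume x: "x \<in> inputs m"
    have "{z \<in> inputs m. (\<lambda>i. z i \<and> i \<in> S) = (\<lambda>i. x i \<and> i \<in> S)} = {z\<in>inputs m. \<forall>i\<in>S. z i = x i}"
      by (auto simp: fun_eq_iff)
    then show "card {z \<in> inputs m. (\<lambda>i. z i \<and> i \<in> S) = (\<lambda>i. x i \<and> i \<in> S)} = 2 ^ (m - card S)"
      using card_agree[OF S x] by simp
  qed
  moreover have "card S \<le> m" using card_mono[OF users_fin S] users_card by simp
  ultimately show ?thesis using log_pow_ratio by simp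
qed

lemma Ent_Xdot: assumes S: "S \<subseteq> users m" "S \<noteq> {}" shows "Ent (Xdot S) = 1"
proof -
  have "Xdot S = (\<lambda>\<eta>. (\<lambda>x. odd (card {i\<in>S. x i})) (fst \<eta>))" unfolding Xdot_def by simp
  moreover have "Ent (\<lambda>\<eta>. (\<lambda>x. odd (card {i\<in>S. x i})) (fst \<eta>)) = - log 2 (real (2 ^ (m - 1)) / 2 ^ m)"
    by (rule Ent_input[where F = "\<lambda>x. odd (card {i\<in>S. x i})"]) (rule card_parity[OF S])
  moreover have "1 \<le> m"
  proof -
    have "card S \<le> m" using card_mono[OF users_fin S(1)] users_card by simp
    moreover have "card S > 0" using S finite_subset[OF S(1) users_fin] by (auto simp: card_gt_0_iff)
    ultimately show ?thesis by simp
  qed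
  ultimately show ?thesis using log_pow_ratio[of 1 m] by simp
qed

end


definition Phi :: "nat \<Rightarrow> (nat set \<Rightarrow> int) \<Rightarrow> nat set \<Rightarrow> bool" where
  "Phi m r S = (S \<noteq> {} \<and> iterk (Min S) (\<lambda>A. r (users m - A) - r (users m) + int (card A))
       (sorted_list_of_set (S - {Min S})) {Min S} = 0)"

lemma Xsub_eq: "(Xsub A x = Xsub A y) = (\<forall>i\<in>A. fst x i = fst y i)"
  by (auto simp: Xsub_def fun_eq_iff)

lemma Xdot_empty: "Xdot {} x = False" by (simp add: Xdot_def)

lemma Xdot_insert: assumes "finite T" "j \<notin> T" shows "Xdot (insert j T) x = (Xdot T x \<noteq> fst x j)"
proof (cases "fst x j")
  case True
  then have "{i\<in>insert j T. fst x i} = insert j {i\<in>T. fst x i}" by auto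
  moreover have "card (insert j {i\<in>T. fst x i}) = Suc (card {i\<in>T. fst x i})"
    using assms by (intro card_insert_disjoint) auto
  ultimately show ?thesis using True unfolding Xdot_def by simp
next
  case False
  then have "{i\<in>insert j T. fst x i} = {i\<in>T. fst x i}" by auto
  then show ?thesis using False unfolding Xdot_def by simp
qed

definition R0 :: "nat \<Rightarrow> (nat \<Rightarrow> bool) \<times> nat \<Rightarrow> bool" where "R0 l x = fst x l"

lemma Tup_R0: "Tup R0 A = Xsub A"
  unfolding Tup_def R0_def Xsub_def fun_eq_iff by auto

lemma Rl_R0: "distinct js \<Longrightarrow> i0 \<notin> set js \<Longrightarrow> Rl i0 R0 js i0 = Xdot (insert i0 (set js))"
proof (induction js)
  case Nil
  show ?case by (auto simp: fun_eq_iff R0_def Xdot_insert Xdot_empty)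
next
  case (Cons j js)
  have ji: "j \<noteq> i0" using Cons.prems by auto
  have "insert i0 (set (j # js)) = insert j (insert i0 (set js))" by auto
  moreover have "j \<notin> insert i0 (set js)" using Cons.prems by auto
  ultimately have r: "Xdot (insert i0 (set (j # js))) x = (Xdot (insert i0 (set js)) x \<noteq> fst x j)" for x
    using Xdot_insert[of "insert i0 (set js)" j x] by simp
  have IH: "Rl i0 R0 js i0 = Xdot (insert i0 (set js))" using Cons by simp
  have o: "Rl i0 R0 js j = R0 j" by (rule Rl_other[OF ji])
  show ?case unfolding fun_eq_iff r by (simp add: IH o R0_def)
qed

context mac begin

definition Jv :: "nat set \<Rightarrow> real" where "Jv A = Ent (\<lambda>x. (Yout x, Xsub A x))"

lemma hyp_conv:
  assumes S: "S \<subseteq> users m"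
  shows "mutual_info m Out W (Xsub S) (YXcompl m S) = card S + Jv (users m - S) - Jv (users m)"
proof -
  have "Ent (\<lambda>x. (Xsub S x, YXcompl m S x)) = Jv (users m)"
    unfolding Jv_def YXcompl_def
    by (rule Ent_cong) (use S in \<open>auto simp: Xsub_eq\<close>)
  moreover have "Ent (YXcompl m S) = Jv (users m - S)"
    unfolding Jv_def YXcompl_def by (rule Ent_cong) auto
  ultimately show ?thesis unfolding mi using Ent_Xsub[OF S] by simp
qed

lemma Jv_empty: "Jv {} = Ent Yout"
  unfolding Jv_def by (rule Ent_cong) (auto simp: Xsub_def)

lemma Qv_R0: "Qv Yout R0 A = Jv A - Jv {}"
  unfolding Qv_def Tup_R0 Jv_empty by (simp add: Jv_def)

end


context mac begin

lemma main_mac: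
  assumes hyp: "\<forall>S\<subseteq>users m. \<exists>k::int. \<bar>mutual_info m Out W (Xsub S) (YXcompl m S) - real_of_int k\<bar> < \<epsilon>"
    and S: "S \<subseteq> users m" and eps: "0 < \<epsilon>" "9 ^ m * (2 * \<epsilon>) < c" "c \<le> 1/8"
  shows "let r = (\<lambda>T. if T \<subseteq> users m then round (mutual_info m Out W (Xsub T) (YXcompl m T)) else 0);
             v = mutual_info m Out W (Xdot S) Yout
         in ((0 \<le> v \<and> v < c) \<or> (1 - c < v \<and> v \<le> 1)) \<and>
            (Phi m r S \<longrightarrow> 1 - c < v \<and> v \<le> 1) \<and>
            (\<not> Phi m r S \<longrightarrow> 0 \<le> v \<and> v < c)"
proof -
  define U where "U = users m"
  define I where "I T = mutual_info m Out W (Xsub T) (YXcompl m T)" for T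
  define r where "r T = (if T \<subseteq> U then round (I T) else 0)" for T
  define v where "v = mutual_info m Out W (Xdot S) Yout"
  have "0 < (9::real) ^ m * (2 * \<epsilon>)" using eps by simp
  then have c0: "0 < c" using eps by linarith
  have e2: "\<epsilon> < 1/2"
  proof -
    have "(1::real) \<le> 9 ^ m" by simp
    then have "2 * \<epsilon> \<le> 9 ^ m * (2 * \<epsilon>)" using eps by (simp add: mult_right_mono)
    then show ?thesis using eps by linarith
  qed
  have rT: "\<bar>I T - r T\<bar> < \<epsilon>" if "T \<subseteq> U" for T
  proof -
    have TU: "T \<subseteq> users m" using that unfolding U_def .
    obtain k :: int where k: "\<bar>I T - k\<bar> < \<epsilon>" using hyp[rule_format, OF TU] unfolding I_def by (elim exE)
    then have "round (I T) = k" using e2 by (intro round_unique') linarith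
    then show ?thesis using k that unfolding r_def by simp
  qed
  define k0 where "k0 A = r (U - A) - r U + int (card A)" for A
  have fU: "finite U" unfolding U_def by (rule users_fin)
  have Q0: "\<forall>A\<subseteq>U. \<bar>Qv Yout R0 A - k0 A\<bar> \<le> 2 * \<epsilon>"
  proof (intro allI impI)
    fix A assume A: "A \<subseteq> U"
    have a1: "I (U - A) = card (U - A) + Jv A - Jv U"
      unfolding I_def using hyp_conv[of "U - A"] A by (simp add: U_def double_diff)
    have a2: "I U = card U + Jv {} - Jv U"
      unfolding I_def using hyp_conv[of U] by (simp add: U_def)
    have cA: "real (card (U - A)) + real (card A) = real (card U)"
      using card_Diff_subset[OF finite_subset[OF A fU] A] card_mono[OF fU A] by simp
    have "Qv Yout R0 A = I (U - A) - I U + card A" unfolding Qv_R0 a1 a2 using cA by simp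
    moreover have "\<bar>I (U - A) - r (U - A)\<bar> < \<epsilon>" "\<bar>I U - r U\<bar> < \<epsilon>" using rT by auto
    ultimately show "\<bar>Qv Yout R0 A - k0 A\<bar> \<le> 2 * \<epsilon>" unfolding k0_def by (simp add: abs_le_iff abs_less_iff; linarith)
  qed
  have main: "((0 \<le> v \<and> v < c) \<or> (1 - c < v \<and> v \<le> 1)) \<and>
            (Phi m r S \<longrightarrow> 1 - c < v \<and> v \<le> 1) \<and> (\<not> Phi m r S \<longrightarrow> 0 \<le> v \<and> v < c)"
  proof (cases "S = {}")
    case True
    have "Xdot S = (\<lambda>x. False)" using True by (simp add: fun_eq_iff Xdot_empty)
    moreover have "Ent (\<lambda>x. (False, Yout x)) = Ent Yout" by (rule Ent_cong) auto
    ultimately have "v = 0" unfolding v_def mi by (simp add: Ent_const)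
    moreover have "\<not> Phi m r S" unfolding Phi_def using True by simp
    ultimately show ?thesis using c0 by simp
  next
    case False
    have fS: "finite S" using finite_subset[OF S users_fin] .
    define i0 where "i0 = Min S"
    have i0S: "i0 \<in> S" unfolding i0_def using fS False by (rule Min_in)
    define js where "js = sorted_list_of_set (S - {i0})"
    have js: "set js = S - {i0}" "distinct js" "length js = card (S - {i0})" using fS unfolding js_def by auto
    have ins: "insert i0 (set js) = S" using js i0S by auto
    have "card (S - {i0}) \<le> m"
      using card_mono[OF users_fin[of m], of "S - {i0}"] S users_card[of m] by auto
    then have "(9::real) ^ length js \<le> 9 ^ m" using js by (simp add: power_increasing)
    then have eb: "9 ^ length js * (2 * \<epsilon>) \<le> 9 ^ m * (2 * \<epsilon>)" using eps by (simp add: mult_right_mono)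
    define eb where "eb = 9 ^ length js * (2 * \<epsilon>)"
    have ebc: "eb < c" "eb < 1/8" using eb eps unfolding eb_def by linarith+
    have it: "\<forall>A\<subseteq>U. \<bar>Qv Yout (Rl i0 R0 js) A - iterk i0 k0 js A\<bar> \<le> eb"
      unfolding eb_def
      by (rule iter[OF Q0]) (use i0S S js ebc in \<open>auto simp: U_def eb_def\<close>)
    have "{i0} \<subseteq> U" using i0S S unfolding U_def by auto
    then have b: "\<bar>Qv Yout (Rl i0 R0 js) {i0} - iterk i0 k0 js {i0}\<bar> \<le> eb" using it by blast
    have Rf: "Rl i0 R0 js i0 = Xdot S" using Rl_R0[OF js(2)] js ins by auto
    define q where "q = Ent (\<lambda>x. (Yout x, Xdot S x)) - Ent Yout"
    have "Ent (\<lambda>x. (Yout x, Tup (Rl i0 R0 js) {i0} x)) = Ent (\<lambda>x. (Yout x, Xdot S x))"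
    proof (rule Ent_cong)
      fix x y
      have "(Tup (Rl i0 R0 js) {i0} x = Tup (Rl i0 R0 js) {i0} y) = (Xdot S x = Xdot S y)"
        using Tup_insert[of i0 "{}" "Rl i0 R0 js" x y] Rf by (simp add: Tup_def)
      then show "((Yout x, Tup (Rl i0 R0 js) {i0} x) = (Yout y, Tup (Rl i0 R0 js) {i0} y)) =
          ((Yout x, Xdot S x) = (Yout y, Xdot S y))" by simp
    qed
    then have qQ: "Qv Yout (Rl i0 R0 js) {i0} = q" unfolding Qv_def q_def by simp
    have q01: "0 \<le> q" "q \<le> 1" unfolding q_def
      using Ent_mono[of "\<lambda>x. (Yout x, Xdot S x)" Yout] Ent_bin[of Yout "Xdot S"] by auto
    have "Ent (\<lambda>x. (Xdot S x, Yout x)) = Ent (\<lambda>x. (Yout x, Xdot S x))" by (rule Ent_cong) auto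
    then have vq: "v = 1 - q" unfolding v_def mi q_def using Ent_Xdot[OF S False] by simp
    define kf where "kf = iterk i0 k0 js {i0}"
    have bq: "\<bar>q - kf\<bar> \<le> eb" using b qQ unfolding kf_def by simp
    have kf01: "kf = 0 \<or> kf = 1" by (rule int01[of q _ eb]) (use bq q01 ebc in auto)
    have phi: "Phi m r S = (kf = 0)"
      unfolding Phi_def kf_def k0_def i0_def js_def U_def using False by simp
    show ?thesis
    proof (cases "kf = 0")
      case True
      then show ?thesis using phi vq bq q01 ebc by (simp add: abs_le_iff; linarith)
    next
      case kf: False
      then have "kf = 1" using kf01 by simp
      then show ?thesis using phi vq bq q01 ebc kf by (simp add: abs_le_iff; linarith)
    qed
  qed
  have rr: "(\<lambda>T. if T \<subseteq> users m then round (mutual_info m Out W (Xsub T) (YXcompl m T)) else 0) = r"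
    unfolding r_def I_def U_def by simp
  show ?thesis unfolding Let_def rr using main unfolding v_def .
qed

end

theorem mainTheorem6:
  fixes m :: nat
  assumes "m \<ge> 1"
  shows "\<forall>\<delta>::real. \<delta> > 0 \<longrightarrow>
    (\<exists>\<epsilon>::real. \<epsilon> > 0 \<and>
      (\<exists>\<Phi> :: (nat set \<Rightarrow> int) \<Rightarrow> nat set \<Rightarrow> bool.
        \<forall>(Out :: nat set) (W :: (nat \<Rightarrow> bool) \<Rightarrow> nat \<Rightarrow> real).
          binary_mac m Out W \<longrightarrow>
          (\<forall>S\<subseteq>users m. \<exists>k::int.
              \<bar>mutual_info m Out W (Xsub S) (YXcompl m S) - real_of_int k\<bar> < \<epsilon>) \<longrightarrow>
          (\<forall>S\<subseteq>users m.
             (let r = (\<lambda>T. if T \<subseteq> users m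
                           then round (mutual_info m Out W (Xsub T) (YXcompl m T)) else 0);
                  v = mutual_info m Out W (Xdot S) Yout
              in ((0 \<le> v \<and> v < \<delta>) \<or> (1 - \<delta> < v \<and> v \<le> 1)) \<and>
             (\<Phi> r S \<longrightarrow> 1 - \<delta> < v \<and> v \<le> 1) \<and>
             (\<not> \<Phi> r S \<longrightarrow> 0 \<le> v \<and> v < \<delta>)))))"
proof (intro allI impI)
  fix \<delta> :: real assume d: "\<delta> > 0"
  define c where "c = min \<delta> (1/8)"
  define \<epsilon> where "\<epsilon> = c / (4 * 9 ^ m)"
  have c0: "0 < c" "c \<le> \<delta>" "c \<le> 1/8" using d unfolding c_def by auto
  have e0: "0 < \<epsilon>" unfolding \<epsilon>_def using c0 by simp
  have e1: "9 ^ m * (2 * \<epsilon>) < c" unfolding \<epsilon>_def using c0 by simp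
  show "\<exists>\<epsilon>::real. \<epsilon> > 0 \<and>
      (\<exists>\<Phi> :: (nat set \<Rightarrow> int) \<Rightarrow> nat set \<Rightarrow> bool.
        \<forall>(Out :: nat set) (W :: (nat \<Rightarrow> bool) \<Rightarrow> nat \<Rightarrow> real).
          binary_mac m Out W \<longrightarrow>
          (\<forall>S\<subseteq>users m. \<exists>k::int.
              \<bar>mutual_info m Out W (Xsub S) (YXcompl m S) - real_of_int k\<bar> < \<epsilon>) \<longrightarrow>
          (\<forall>S\<subseteq>users m.
             (let r = (\<lambda>T. if T \<subseteq> users m
                           then round (mutual_info m Out W (Xsub T) (YXcompl m T)) else 0);
                  v = mutual_info m Out W (Xdot S) Yout
              in ((0 \<le> v \<and> v < \<delta>) \<or> (1 - \<delta> < v \<and> v \<le> 1)) \<and>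
             (\<Phi> r S \<longrightarrow> 1 - \<delta> < v \<and> v \<le> 1) \<and>
             (\<not> \<Phi> r S \<longrightarrow> 0 \<le> v \<and> v < \<delta>))))"
  proof (rule exI[where x = \<epsilon>], intro conjI e0, rule exI[where x = "Phi m"], intro allI impI)
    fix Out W S
    assume bm: "binary_mac m Out W"
      and hyp: "\<forall>S\<subseteq>users m. \<exists>k::int. \<bar>mutual_info m Out W (Xsub S) (YXcompl m S) - real_of_int k\<bar> < \<epsilon>"
      and S: "S \<subseteq> users m"
    interpret mac m Out W by (rule mac.intro[OF bm])
    have h: "let r = (\<lambda>T. if T \<subseteq> users m then round (mutual_info m Out W (Xsub T) (YXcompl m T)) else 0);
             v = mutual_info m Out W (Xdot S) Yout
         in ((0 \<le> v \<and> v < c) \<or> (1 - c < v \<and> v \<le> 1)) \<and>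
            (Phi m r S \<longrightarrow> 1 - c < v \<and> v \<le> 1) \<and>
            (\<not> Phi m r S \<longrightarrow> 0 \<le> v \<and> v < c)"
      by (rule main_mac[OF hyp S e0 e1 c0(3)])
    then show "let r = (\<lambda>T. if T \<subseteq> users m
                           then round (mutual_info m Out W (Xsub T) (YXcompl m T)) else 0);
                  v = mutual_info m Out W (Xdot S) Yout
              in ((0 \<le> v \<and> v < \<delta>) \<or> (1 - \<delta> < v \<and> v \<le> 1)) \<and>
             (Phi m r S \<longrightarrow> 1 - \<delta> < v \<and> v \<le> 1) \<and>
             (\<not> Phi m r S \<longrightarrow> 0 \<le> v \<and> v < \<delta>)"
      unfolding Let_def using c0 by auto
  qed
qed


end
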